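(* Let $X$ be a Hausdorff topological space and $\mu:X^k\to X$ a continuous $k$-mean whose barycentric operator $\beta$ is power convergent. Define $\tilde\mu:X^{k+1}\to X$ by $\tilde\mu(\mathbf{x})=x^*$ where $\lim_n\beta^n(\mathbf{x})=(x^*,\ldots,x^* )$. Then: (i) $\tilde\mu$ is a $(k+1)$-mean on $X$ that is a $\beta$-invariant extension of $\mu$; (ii) any continuous $(k+1)$-mean on $X$ that is a $\beta$-invariant extension of $\mu$ equals $\tilde\mu$; (iii) if $\mu$ is symmetric, so is $\tilde\mu$.
   Context: A $k$-mean on $X$ is a map $\mu:X^k\to X$ with $\mu(x,\ldots,x)=x$; it is symmetric if it is invariant under permutations of its arguments. The barycentric operator $\beta=\beta_\mu:X^{k+1}\to X^{k+1}$ is $\beta(\mathbf{x})=(\mu(\pi_{\neq1}\mathbf{x}),\ldots,\mu(\pi_{\neq k+1}\mathbf{x}))$ where $\pi_{\neq j}(x_1,\ldots,x_{k+1})=(x_1,\ldots,x_{j-1},x_{j+1},\ldots,x_{k+1})$. $\beta$ is power convergent if for each $\mathbf{x}\in X^{k+1}$, $\lim_n\beta^n(\mathbf{x})=(x^*,\ldots,x^* )$ for some $x^*\in X$. A $(k+1)$-mean $\nu$ is a $\beta$-invariant extension of $\mu$ if $\nu\circ\beta_\mu=\nu$. *)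

theory Defs
  imports "HOL-Analysis.Analysis" "HOL-Combinatorics.Permutations"
begin

text \<open>Tuples in X^k are represented as extensional functions on the index set {..<k}
  (0-indexed), i.e. elements of PiE {..<k} (\<lambda>_. topspace X); X^k carries the
  product topology.\<close>

definition tuples :: "'a topology \<Rightarrow> nat \<Rightarrow> (nat \<Rightarrow> 'a) set" where
  "tuples X k = PiE {..<k} (\<lambda>_. topspace X)"

definition power_top :: "'a topology \<Rightarrow> nat \<Rightarrow> (nat \<Rightarrow> 'a) topology" where
  "power_top X k = product_topology (\<lambda>_. X) {..<k}"

definition diag :: "nat \<Rightarrow> 'a \<Rightarrow> (nat \<Rightarrow> 'a)" where
  "diag k x = (\<lambda>i\<in>{..<k}. x)"

definition is_mean :: "'a topology \<Rightarrow> nat \<Rightarrow> ((nat \<Rightarrow> 'a) \<Rightarrow> 'a) \<Rightarrow> bool" where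
  "is_mean X k \<mu> \<longleftrightarrow> (\<forall>x\<in>tuples X k. \<mu> x \<in> topspace X) \<and>
                      (\<forall>x\<in>topspace X. \<mu> (diag k x) = x)"

definition symmetric_mean :: "'a topology \<Rightarrow> nat \<Rightarrow> ((nat \<Rightarrow> 'a) \<Rightarrow> 'a) \<Rightarrow> bool" where
  "symmetric_mean X k \<mu> \<longleftrightarrow>
     (\<forall>p x. p permutes {..<k} \<and> x \<in> tuples X k \<longrightarrow> \<mu> (x \<circ> p) = \<mu> x)"

definition drop_coord :: "nat \<Rightarrow> nat \<Rightarrow> (nat \<Rightarrow> 'a) \<Rightarrow> (nat \<Rightarrow> 'a)" where
  "drop_coord k j x = (\<lambda>i\<in>{..<k}. if i < j then x i else x (Suc i))"

definition barycentric :: "nat \<Rightarrow> ((nat \<Rightarrow> 'a) \<Rightarrow> 'a) \<Rightarrow> (nat \<Rightarrow> 'a) \<Rightarrow> (nat \<Rightarrow> 'a)" where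
  "barycentric k \<mu> x = (\<lambda>j\<in>{..<Suc k}. \<mu> (drop_coord k j x))"

definition power_convergent :: "'a topology \<Rightarrow> nat \<Rightarrow> ((nat \<Rightarrow> 'a) \<Rightarrow> 'a) \<Rightarrow> bool" where
  "power_convergent X k \<mu> \<longleftrightarrow>
     (\<forall>x\<in>tuples X (Suc k). \<exists>y\<in>topspace X.
        limitin (power_top X (Suc k)) (\<lambda>n. (barycentric k \<mu> ^^ n) x) (diag (Suc k) y) sequentially)"

definition mean_limit :: "'a topology \<Rightarrow> nat \<Rightarrow> ((nat \<Rightarrow> 'a) \<Rightarrow> 'a) \<Rightarrow> (nat \<Rightarrow> 'a) \<Rightarrow> 'a" where
  "mean_limit X k \<mu> x = (THE y. y \<in> topspace X \<and>
        limitin (power_top X (Suc k)) (\<lambda>n. (barycentric k \<mu> ^^ n) x) (diag (Suc k) y) sequentially)"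

definition invariant_extension :: "'a topology \<Rightarrow> nat \<Rightarrow> ((nat \<Rightarrow> 'a) \<Rightarrow> 'a) \<Rightarrow> ((nat \<Rightarrow> 'a) \<Rightarrow> 'a) \<Rightarrow> bool" where
  "invariant_extension X k \<mu> \<nu> \<longleftrightarrow> is_mean X (Suc k) \<nu> \<and>
     (\<forall>x\<in>tuples X (Suc k). \<nu> (barycentric k \<mu> x) = \<nu> x)"

end

theory Submission
  imports Defs
begin

lemma topspace_power_top: "topspace (power_top X k) = tuples X k"
  by (simp add: power_top_def tuples_def)

lemma drop_coord_tuples:
  assumes "x \<in> tuples X (Suc k)"
  shows "drop_coord k j x \<in> tuples X k"
  using assms unfolding tuples_def drop_coord_def by (auto simp: PiE_iff)

lemma bary_tuples:
  assumes "is_mean X k \<mu>" "x \<in> tuples X (Suc k)"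
  shows "barycentric k \<mu> x \<in> tuples X (Suc k)"
  using assms drop_coord_tuples[OF assms(2)] unfolding is_mean_def
  by (auto simp: barycentric_def tuples_def PiE_iff)

lemma iter_tuples:
  assumes "is_mean X k \<mu>" "x \<in> tuples X (Suc k)"
  shows "(barycentric k \<mu> ^^ n) x \<in> tuples X (Suc k)"
  by (induction n) (use assms bary_tuples in auto)

lemma diag_tuples: "y \<in> topspace X \<Longrightarrow> diag k y \<in> tuples X k"
  by (simp add: diag_def tuples_def)

lemma diag_inj: "diag (Suc k) y = diag (Suc k) z \<Longrightarrow> y = z"
  unfolding diag_def by (metis lessThan_iff restrict_apply' zero_less_Suc)

lemma haus_power:
  assumes "Hausdorff_space X" shows "Hausdorff_space (power_top X k)"
  using assms by (simp add: power_top_def Hausdorff_space_product_topology)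

lemma mean_limit_eq:
  assumes "Hausdorff_space X" "y \<in> topspace X"
    "limitin (power_top X (Suc k)) (\<lambda>n. (barycentric k \<mu> ^^ n) x) (diag (Suc k) y) sequentially"
  shows "mean_limit X k \<mu> x = y"
  unfolding mean_limit_def
proof (rule the_equality)
  show "y \<in> topspace X \<and> limitin (power_top X (Suc k)) (\<lambda>n. (barycentric k \<mu> ^^ n) x) (diag (Suc k) y) sequentially"
    using assms by auto
next
  fix z assume "z \<in> topspace X \<and> limitin (power_top X (Suc k)) (\<lambda>n. (barycentric k \<mu> ^^ n) x) (diag (Suc k) z) sequentially"
  then have "diag (Suc k) z = diag (Suc k) y"
    using limitin_Hausdorff_unique[OF _ assms(3) _ haus_power[OF assms(1)]] by auto
  then show "z = y" by (rule diag_inj)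
qed

lemma mean_limit_prop:
  assumes "Hausdorff_space X" "power_convergent X k \<mu>" "x \<in> tuples X (Suc k)"
  shows "mean_limit X k \<mu> x \<in> topspace X \<and>
    limitin (power_top X (Suc k)) (\<lambda>n. (barycentric k \<mu> ^^ n) x) (diag (Suc k) (mean_limit X k \<mu> x)) sequentially"
proof -
  obtain y where "y \<in> topspace X" "limitin (power_top X (Suc k)) (\<lambda>n. (barycentric k \<mu> ^^ n) x) (diag (Suc k) y) sequentially"
    using assms unfolding power_convergent_def by blast
  with mean_limit_eq[OF assms(1) this] show ?thesis by simp
qed

lemma drop_diag: "drop_coord k j (diag (Suc k) y) = diag k y"
  unfolding drop_coord_def diag_def by (rule ext) auto

lemma bary_diag: "is_mean X k \<mu> \<Longrightarrow> y \<in> topspace X \<Longrightarrow> barycentric k \<mu> (diag (Suc k) y) = diag (Suc k) y"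
  unfolding barycentric_def is_mean_def drop_diag by (rule ext) (auto simp: diag_def)

lemma iter_diag: "is_mean X k \<mu> \<Longrightarrow> y \<in> topspace X \<Longrightarrow> (barycentric k \<mu> ^^ n) (diag (Suc k) y) = diag (Suc k) y"
  by (induction n) (auto simp: bary_diag)

definition ins_idx :: "nat \<Rightarrow> nat \<Rightarrow> nat" where "ins_idx j i = (if i < j then i else Suc i)"
definition del_idx :: "nat \<Rightarrow> nat \<Rightarrow> nat" where "del_idx m n = (if n < m then n else n - 1)"

lemma ins_del: "m \<noteq> c \<Longrightarrow> ins_idx c (del_idx c m) = m"
  unfolding ins_idx_def del_idx_def by auto

lemma drop_coord_alt: "drop_coord k j x = (\<lambda>i\<in>{..<k}. x (ins_idx j i))"
  unfolding drop_coord_def ins_idx_def by (rule ext) simp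

lemma perm_step:
  assumes p: "p permutes {..<Suc k}" and j: "j < Suc k"
  defines "q \<equiv> (\<lambda>i. if i < k then del_idx (p j) (p (ins_idx j i)) else i)"
  shows "q permutes {..<k}" and "\<And>x. drop_coord k j (x \<circ> p) = drop_coord k (p j) x \<circ> q"
proof -
  have pin: "\<And>n. n < Suc k \<Longrightarrow> p n < Suc k" using p by (meson lessThan_iff permutes_in_image)
  have pinj: "\<And>a b. p a = p b \<Longrightarrow> a = b" using p by (meson permutes_inj injD)
  have ne: "\<And>i. p (ins_idx j i) \<noteq> p j"
  proof
    fix i assume "p (ins_idx j i) = p j"
    then have "ins_idx j i = j" by (rule pinj)
    then show False by (simp add: ins_idx_def split: if_splits)
  qed
  have qk: "\<And>i. i < k \<Longrightarrow> q i < k"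
  proof -
    fix i assume "i < k"
    then have "ins_idx j i < Suc k" by (auto simp: ins_idx_def)
    then have "p (ins_idx j i) < Suc k" by (rule pin)
    with ne[of i] pin[OF j] show "q i < k" using \<open>i < k\<close> by (auto simp: q_def del_idx_def)
  qed
  have eins: "\<And>i. i < k \<Longrightarrow> ins_idx (p j) (q i) = p (ins_idx j i)"
    using ne ins_del by (simp add: q_def)
  have injq: "inj_on q {..<k}"
  proof
    fix a b assume "a \<in> {..<k}" "b \<in> {..<k}" "q a = q b"
    then have "p (ins_idx j a) = p (ins_idx j b)" using eins by (metis lessThan_iff)
    then have "ins_idx j a = ins_idx j b" by (rule pinj)
    then show "a = b" by (auto simp: ins_idx_def split: if_splits)
  qed
  have "q ` {..<k} \<subseteq> {..<k}" using qk by auto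
  then have "q ` {..<k} = {..<k}" using injq by (simp add: endo_inj_surj)
  then have "bij_betw q {..<k} {..<k}" using injq by (simp add: bij_betw_def)
  then show "q permutes {..<k}" by (rule bij_imp_permutes) (auto simp: q_def)
  show "\<And>x. drop_coord k j (x \<circ> p) = drop_coord k (p j) x \<circ> q"
    unfolding drop_coord_alt by (rule ext) (auto simp: qk eins, auto simp: q_def)
qed

lemma bary_perm:
  assumes sym: "symmetric_mean X k \<mu>" and p: "p permutes {..<Suc k}" and x: "x \<in> tuples X (Suc k)"
  shows "barycentric k \<mu> (x \<circ> p) = barycentric k \<mu> x \<circ> p"
proof (rule ext)
  fix j
  show "barycentric k \<mu> (x \<circ> p) j = (barycentric k \<mu> x \<circ> p) j"
  proof (cases "j < Suc k")
    case True
    obtain q where q: "q permutes {..<k}" "drop_coord k j (x \<circ> p) = drop_coord k (p j) x \<circ> q"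
      using perm_step[OF p True] by blast
    have "\<mu> (drop_coord k j (x \<circ> p)) = \<mu> (drop_coord k (p j) x)"
      using sym q drop_coord_tuples[OF x] unfolding symmetric_mean_def by metis
    moreover have "p j < Suc k" using p True by (meson lessThan_iff permutes_in_image)
    ultimately show ?thesis using True by (simp add: barycentric_def)
  next
    case False
    then have "p j = j" using p by (meson lessThan_iff permutes_not_in)
    then show ?thesis using False by (simp add: barycentric_def)
  qed
qed

lemma perm_lt: "p permutes {..<n} \<Longrightarrow> i < n \<Longrightarrow> p i < n"
  by (metis lessThan_iff permutes_in_image)

lemma perm_lt_iff: "p permutes {..<n} \<Longrightarrow> (p i < n) = (i < n)"
  by (metis lessThan_iff permutes_in_image)

lemma perm_tuples:
  assumes p: "p permutes {..<n}" and x: "x \<in> tuples X n"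
  shows "x \<circ> p \<in> tuples X n"
  using assms unfolding tuples_def
  by (auto simp: PiE_iff extensional_def perm_lt permutes_not_in)

lemma perm_cont:
  assumes p: "p permutes {..<n}"
  shows "continuous_map (power_top X n) (power_top X n) (\<lambda>x. x \<circ> p)"
  unfolding power_top_def continuous_map_componentwise
proof (intro conjI ballI)
  show "(\<lambda>x. x \<circ> p) ` topspace (product_topology (\<lambda>_. X) {..<n}) \<subseteq> extensional {..<n}"
    using perm_tuples[OF p, of _ X] by (auto simp: tuples_def PiE_iff)
  fix i assume "i \<in> {..<n}"
  then have pi: "p i \<in> {..<n}" using p by (simp add: perm_lt)
  show "continuous_map (product_topology (\<lambda>_. X) {..<n}) X (\<lambda>x. (x \<circ> p) i)"
    using continuous_map_product_projection[OF pi, of "\<lambda>_. X"] by (simp add: o_def)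
qed

lemma diag_perm: "p permutes {..<n} \<Longrightarrow> diag n y \<circ> p = diag n y"
  unfolding diag_def by (rule ext) (auto simp: perm_lt_iff)

theorem proposition2p4:
  fixes X :: "'a topology" and k :: nat and \<mu> :: "(nat \<Rightarrow> 'a) \<Rightarrow> 'a"
  assumes "Hausdorff_space X"
    and "is_mean X k \<mu>"
    and "continuous_map (power_top X k) X \<mu>"
    and "power_convergent X k \<mu>"
  shows "invariant_extension X k \<mu> (mean_limit X k \<mu>)
    \<and> (\<forall>\<nu>. continuous_map (power_top X (Suc k)) X \<nu> \<and> invariant_extension X k \<mu> \<nu>
           \<longrightarrow> (\<forall>x\<in>tuples X (Suc k). \<nu> x = mean_limit X k \<mu> x))
    \<and> (symmetric_mean X k \<mu> \<longrightarrow> symmetric_mean X (Suc k) (mean_limit X k \<mu>))"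
proof (intro conjI allI impI ballI)
  have mean: "is_mean X (Suc k) (mean_limit X k \<mu>)"
    unfolding is_mean_def
  proof (intro conjI ballI)
    fix x assume "x \<in> tuples X (Suc k)"
    then show "mean_limit X k \<mu> x \<in> topspace X" using mean_limit_prop[OF assms(1) assms(4)] by blast
  next
    fix y assume y: "y \<in> topspace X"
    show "mean_limit X k \<mu> (diag (Suc k) y) = y"
      by (rule mean_limit_eq[OF assms(1) y]) (simp add: iter_diag[OF assms(2) y] topspace_power_top diag_tuples y)
  qed
  show "invariant_extension X k \<mu> (mean_limit X k \<mu>)"
    unfolding invariant_extension_def
  proof (intro conjI ballI mean)
    fix x assume x: "x \<in> tuples X (Suc k)"
    from mean_limit_prop[OF assms(1) assms(4) x] have L: "mean_limit X k \<mu> x \<in> topspace X"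
      "limitin (power_top X (Suc k)) (\<lambda>n. (barycentric k \<mu> ^^ n) x) (diag (Suc k) (mean_limit X k \<mu> x)) sequentially"
      by auto
    have "limitin (power_top X (Suc k)) (\<lambda>n. (barycentric k \<mu> ^^ n) (barycentric k \<mu> x)) (diag (Suc k) (mean_limit X k \<mu> x)) sequentially"
      using limitin_sequentially_offset[OF L(2), of 1] by (simp add: funpow_Suc_right del: funpow.simps)
    then show "mean_limit X k \<mu> (barycentric k \<mu> x) = mean_limit X k \<mu> x"
      by (rule mean_limit_eq[OF assms(1) L(1)])
  qed
next
  fix \<nu> x
  assume a: "continuous_map (power_top X (Suc k)) X \<nu> \<and> invariant_extension X k \<mu> \<nu>"
    and x: "x \<in> tuples X (Suc k)"
  from mean_limit_prop[OF assms(1) assms(4) x] have L: "mean_limit X k \<mu> x \<in> topspace X"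
    "limitin (power_top X (Suc k)) (\<lambda>n. (barycentric k \<mu> ^^ n) x) (diag (Suc k) (mean_limit X k \<mu> x)) sequentially"
    by auto
  have inv: "\<nu> ((barycentric k \<mu> ^^ n) x) = \<nu> x" for n
  proof (induction n)
    case (Suc n)
    have "\<nu> (barycentric k \<mu> ((barycentric k \<mu> ^^ n) x)) = \<nu> ((barycentric k \<mu> ^^ n) x)"
      using a iter_tuples[OF assms(2) x] unfolding invariant_extension_def by blast
    then show ?case using Suc by simp
  qed simp
  have "limitin X (\<nu> \<circ> (\<lambda>n. (barycentric k \<mu> ^^ n) x)) (\<nu> (diag (Suc k) (mean_limit X k \<mu> x))) sequentially"
    using continuous_map_limit[OF _ L(2)] a by blast
  moreover have "\<nu> (diag (Suc k) (mean_limit X k \<mu> x)) = mean_limit X k \<mu> x"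
    using a L(1) unfolding invariant_extension_def is_mean_def by blast
  ultimately have "limitin X (\<lambda>n. \<nu> x) (mean_limit X k \<mu> x) sequentially"
    by (simp add: o_def inv)
  moreover have "limitin X (\<lambda>n. \<nu> x) (\<nu> x) sequentially"
    using a x unfolding invariant_extension_def is_mean_def by auto
  ultimately show "\<nu> x = mean_limit X k \<mu> x"
    using limitin_Hausdorff_unique[OF _ _ _ assms(1)] by (metis trivial_limit_sequentially)
next
  assume sym: "symmetric_mean X k \<mu>"
  show "symmetric_mean X (Suc k) (mean_limit X k \<mu>)"
    unfolding symmetric_mean_def
  proof (intro allI impI)
    fix p x assume px: "p permutes {..<Suc k} \<and> x \<in> tuples X (Suc k)"
    then have p: "p permutes {..<Suc k}" and x: "x \<in> tuples X (Suc k)" by auto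
    have it: "(barycentric k \<mu> ^^ n) (x \<circ> p) = (barycentric k \<mu> ^^ n) x \<circ> p" for n
    proof (induction n)
      case (Suc n)
      have e: "\<And>y. (barycentric k \<mu> ^^ Suc n) y = barycentric k \<mu> ((barycentric k \<mu> ^^ n) y)"
        by simp
      show ?case unfolding e Suc.IH by (rule bary_perm[OF sym p iter_tuples[OF assms(2) x, of n]])
    qed simp
    from mean_limit_prop[OF assms(1) assms(4) x] have L: "mean_limit X k \<mu> x \<in> topspace X"
      "limitin (power_top X (Suc k)) (\<lambda>n. (barycentric k \<mu> ^^ n) x) (diag (Suc k) (mean_limit X k \<mu> x)) sequentially"
      by auto
    have "limitin (power_top X (Suc k)) ((\<lambda>y. y \<circ> p) \<circ> (\<lambda>n. (barycentric k \<mu> ^^ n) x)) (diag (Suc k) (mean_limit X k \<mu> x) \<circ> p) sequentially"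
      by (rule continuous_map_limit[OF perm_cont[OF p] L(2)])
    moreover have eq: "(\<lambda>y. y \<circ> p) \<circ> (\<lambda>n. (barycentric k \<mu> ^^ n) x) = (\<lambda>n. (barycentric k \<mu> ^^ n) x \<circ> p)"
      by (rule ext) simp
    ultimately have "limitin (power_top X (Suc k)) (\<lambda>n. (barycentric k \<mu> ^^ n) (x \<circ> p)) (diag (Suc k) (mean_limit X k \<mu> x)) sequentially"
      unfolding it eq diag_perm[OF p] by blast
    then show "mean_limit X k \<mu> (x \<circ> p) = mean_limit X k \<mu> x"
      by (rule mean_limit_eq[OF assms(1) L(1)])
  qed
qed

end
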